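(* There exists an $S(3,K_4^{(3)}+e,v)$ for each $v\in\{10,12,15\}$.
   Context: $K_4^{(3)}+e$ denotes the 3-uniform hypergraph with vertex set $\{1,2,3,4,5\}$ and edge set $\{\{1,2,3\},\{1,2,4\},\{1,3,4\},\{2,3,4\},\{3,4,5\}\}$. An $S(3,K_4^{(3)}+e,v)$ is a collection of 3-uniform hypergraphs (blocks) on subsets of a $v$-set $X$, each isomorphic to $K_4^{(3)}+e$, whose edge sets partition the set of all 3-subsets of $X$. *)

theory Defs
  imports Main
begin

definition K4e_edges :: "nat set set" where
  "K4e_edges = {{1,2,3},{1,2,4},{1,3,4},{2,3,4},{3,4,5}}"

definition is_K4e_block :: "'a set \<Rightarrow> ('a set \<times> 'a set set) \<Rightarrow> bool" where
  "is_K4e_block X B \<longleftrightarrow> fst B \<subseteq> X \<and>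
     (\<exists>f. bij_betw f {1..5::nat} (fst B) \<and> snd B = (\<lambda>e. f ` e) ` K4e_edges)"

text \<open>An S(3, K_4^(3)+e, v) on the finite set X: a collection of blocks whose edge
  sets partition the set of all 3-subsets of X (every 3-subset of X is an edge of
  exactly one block; block edges are automatically 3-subsets of X).\<close>
definition is_S3_K4e :: "'a set \<Rightarrow> ('a set \<times> 'a set set) set \<Rightarrow> bool" where
  "is_S3_K4e X \<B> \<longleftrightarrow> finite X \<and> (\<forall>B\<in>\<B>. is_K4e_block X B) \<and>
     (\<forall>T. T \<subseteq> X \<and> card T = 3 \<longrightarrow> (\<exists>!B. B \<in> \<B> \<and> T \<in> snd B))"

end

theory Submission
  imports Defs
begin

definition sort3 :: "nat \<times> nat \<times> nat \<Rightarrow> nat \<times> nat \<times> nat" where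
  "sort3 p = (case p of (x,y,z) \<Rightarrow>
     (if x \<le> y then
        (if y \<le> z then (x,y,z) else if x \<le> z then (x,z,y) else (z,x,y))
      else
        (if x \<le> z then (y,x,z) else if y \<le> z then (y,z,x) else (z,y,x))))"

definition sedges :: "nat \<times> nat \<times> nat \<times> nat \<times> nat \<Rightarrow> (nat \<times> nat \<times> nat) list" where
  "sedges t = (case t of (a,b,c,d,e) \<Rightarrow> map sort3 [(a,b,c),(a,b,d),(a,c,d),(b,c,d),(c,d,e)])"

definition mkB :: "nat \<times> nat \<times> nat \<times> nat \<times> nat \<Rightarrow> nat set \<times> nat set set" where
  "mkB t = (case t of (a,b,c,d,e) \<Rightarrow> ({a,b,c,d,e}, {{a,b,c},{a,b,d},{a,c,d},{b,c,d},{c,d,e}}))"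

definition valid :: "nat \<Rightarrow> nat \<times> nat \<times> nat \<times> nat \<times> nat \<Rightarrow> bool" where
  "valid v t = (case t of (a,b,c,d,e) \<Rightarrow> distinct [a,b,c,d,e] \<and> a < v \<and> b < v \<and> c < v \<and> d < v \<and> e < v)"

definition lk :: "nat list list list \<Rightarrow> nat \<times> nat \<times> nat \<Rightarrow> nat" where
  "lk tbl p = (case p of (x,y,z) \<Rightarrow> tbl ! x ! y ! z)"

definition check :: "nat \<Rightarrow> (nat \<times> nat \<times> nat \<times> nat \<times> nat) list \<Rightarrow> nat list list list \<Rightarrow> bool" where
  "check v bs tbl = (list_all (valid v) bs \<and>
     list_all (\<lambda>a. list_all (\<lambda>b. list_all (\<lambda>c. lk tbl (a,b,c) < length bs \<and>
        (a,b,c) \<in> set (sedges (bs ! lk tbl (a,b,c)))) [Suc b..<v]) [Suc a..<v]) [0..<v] \<and>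
     list_all (\<lambda>j. list_all (\<lambda>p. lk tbl p = j) (sedges (bs ! j))) [0..<length bs])"

lemma sort3_set:
  assumes "sort3 (x,y,z) = (a,b,c)"
  shows "{x,y,z} = {a,b,c}"
  using assms unfolding sort3_def by (auto split: if_splits)

lemma sort3_sorted:
  assumes "sort3 (x,y,z) = (a,b,c)" "x \<noteq> y" "y \<noteq> z" "x \<noteq> z"
  shows "a < b \<and> b < c"
  using assms unfolding sort3_def by (auto split: if_splits)

lemma sorted_set_eq:
  fixes a b c a' b' c' :: nat
  assumes "a < b" "b < c" "a' < b'" "b' < c'" "{a,b,c} = {a',b',c'}"
  shows "(a,b,c) = (a',b',c')"
proof -
  have "a \<in> {a',b',c'}" "b \<in> {a',b',c'}" "c \<in> {a',b',c'}"
       "a' \<in> {a,b,c}" "b' \<in> {a,b,c}" "c' \<in> {a,b,c}" using assms(5) by auto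
  then show ?thesis using assms(1-4) by auto
qed

lemma sort3_eq:
  assumes "x \<noteq> y" "y \<noteq> z" "x \<noteq> z" "a < b" "b < c" "{x,y,z} = {a,b,c}"
  shows "sort3 (x,y,z) = (a,b,c)"
proof -
  obtain a' b' c' where s: "sort3 (x,y,z) = (a',b',c')" by (cases "sort3 (x,y,z)") auto
  from sort3_set[OF s] sort3_sorted[OF s assms(1-3)] assms(4-6) sorted_set_eq[of a b c a' b' c']
  show ?thesis using s by auto
qed

lemma valid_block:
  assumes "valid v t"
  shows "is_K4e_block {0..<v} (mkB t)"
proof -
  obtain a b c d e where t: "t = (a,b,c,d,e)" by (cases t) auto
  have dist: "distinct [a,b,c,d,e]" and lt: "a < v" "b < v" "c < v" "d < v" "e < v"
    using assms unfolding valid_def t by auto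
  define f where "f = (\<lambda>i::nat. [a,b,c,d,e] ! (i - 1))"
  have I: "{1..5::nat} = {1,2,3,4,5}" by (simp add: atLeastAtMostSuc_conv numeral_eq_Suc insert_commute)
  have f1: "f 1 = a" "f 2 = b" "f 3 = c" "f 4 = d" "f 5 = e" unfolding f_def by simp_all
  have "inj_on f {1,2,3,4,5}" using dist by (simp add: f_def)
  moreover have "f ` {1,2,3,4,5} = {a,b,c,d,e}" by (simp add: f_def)
  ultimately have bij: "bij_betw f {1..5::nat} {a,b,c,d,e}" unfolding bij_betw_def I by simp
  have im: "{{a,b,c},{a,b,d},{a,c,d},{b,c,d},{c,d,e}} = (\<lambda>x. f ` x) ` K4e_edges"
    unfolding K4e_edges_def by (simp add: f_def)
  have "fst (mkB t) \<subseteq> {0..<v}" using lt unfolding mkB_def t by simp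
  moreover have "snd (mkB t) = {{a,b,c},{a,b,d},{a,c,d},{b,c,d},{c,d,e}}" "fst (mkB t) = {a,b,c,d,e}"
    unfolding mkB_def t by simp_all
  ultimately show ?thesis unfolding is_K4e_block_def using bij im by metis
qed

lemma edge_mem:
  "(x,y,z) \<in> {(a1,b1,c1),(a1,b1,d1),(a1,c1,d1),(b1,c1,d1),(c1::nat,d1::nat,e1::nat)} \<Longrightarrow>
  {x,y,z} \<in> {{a1,b1,c1},{a1,b1,d1},{a1,c1,d1},{b1,c1,d1},{c1,d1,e1}}"
  apply (simp only: insert_iff empty_iff prod.inject)
  apply (elim disjE conjE FalseE; hypsubst; simp only: simp_thms)
  done

lemma sedges_mem:
  assumes "p \<in> set (sedges t)" "p = (a,b,c)"
  shows "{a,b,c} \<in> snd (mkB t)"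
proof -
  obtain a1 b1 c1 d1 e1 where t: "t = (a1,b1,c1,d1,e1)" by (cases t) auto
  have "p \<in> sort3 ` set [(a1,b1,c1),(a1,b1,d1),(a1,c1,d1),(b1,c1,d1),(c1,d1,e1)]"
    using assms(1) unfolding t sedges_def by (simp only: case_prod_conv set_map)
  then obtain q where q0: "q \<in> {(a1,b1,c1),(a1,b1,d1),(a1,c1,d1),(b1,c1,d1),(c1,d1,e1)}" "sort3 q = p"
    by (auto simp only: set_simps image_iff)
  obtain x y z where qq: "q = (x,y,z)" by (cases q) auto
  have "{x,y,z} = {a,b,c}" using sort3_set q0(2) assms(2) qq by blast
  moreover have "{x,y,z} \<in> snd (mkB t)" unfolding t mkB_def case_prod_conv snd_conv
    by (rule edge_mem) (use q0(1) qq in simp)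
  ultimately show ?thesis by simp
qed

lemma mem_sedges:
  assumes "valid v t" "{a,b,c} \<in> snd (mkB t)" "a < b" "b < c"
  shows "(a,b,c) \<in> set (sedges t)"
proof -
  obtain a1 b1 c1 d1 e1 where t: "t = (a1,b1,c1,d1,e1)" by (cases t) auto
  have dist: "distinct [a1,b1,c1,d1,e1]" using assms(1) unfolding valid_def t by auto
  have S: "set (sedges t) = {sort3 (a1,b1,c1), sort3 (a1,b1,d1), sort3 (a1,c1,d1), sort3 (b1,c1,d1), sort3 (c1,d1,e1)}"
    unfolding t sedges_def by simp
  from assms(2) have "{a,b,c} = {a1,b1,c1} \<or> {a,b,c} = {a1,b1,d1} \<or> {a,b,c} = {a1,c1,d1}
     \<or> {a,b,c} = {b1,c1,d1} \<or> {a,b,c} = {c1,d1,e1}" unfolding mkB_def t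
    by (simp only: case_prod_conv snd_conv insert_iff empty_iff simp_thms)
  then show ?thesis
  proof (elim disjE)
    assume h: "{a,b,c} = {a1,b1,c1}"
    have "sort3 (a1,b1,c1) = (a,b,c)" by (rule sort3_eq) (use dist assms(3,4) h in auto)
    then show ?thesis unfolding S by simp
  next
    assume h: "{a,b,c} = {a1,b1,d1}"
    have "sort3 (a1,b1,d1) = (a,b,c)" by (rule sort3_eq) (use dist assms(3,4) h in auto)
    then show ?thesis unfolding S by simp
  next
    assume h: "{a,b,c} = {a1,c1,d1}"
    have "sort3 (a1,c1,d1) = (a,b,c)" by (rule sort3_eq) (use dist assms(3,4) h in auto)
    then show ?thesis unfolding S by simp
  next
    assume h: "{a,b,c} = {b1,c1,d1}"
    have "sort3 (b1,c1,d1) = (a,b,c)" by (rule sort3_eq) (use dist assms(3,4) h in auto)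
    then show ?thesis unfolding S by simp
  next
    assume h: "{a,b,c} = {c1,d1,e1}"
    have "sort3 (c1,d1,e1) = (a,b,c)" by (rule sort3_eq) (use dist assms(3,4) h in auto)
    then show ?thesis unfolding S by simp
  qed
qed

lemma card3_sorted:
  fixes T :: "nat set"
  assumes "card T = 3"
  shows "\<exists>a b c. a < b \<and> b < c \<and> T = {a,b,c}"
proof -
  obtain x y z where T: "T = {x,y,z}" "x \<noteq> y" "y \<noteq> z" "x \<noteq> z"
    using assms by (auto simp: card_3_iff)
  obtain a b c where s: "sort3 (x,y,z) = (a,b,c)" by (cases "sort3 (x,y,z)") auto
  have "T = {a,b,c}" using sort3_set[OF s] T(1) by simp
  then show ?thesis using sort3_sorted[OF s T(2-4)] by blast
qed

lemma check_sound:
  assumes "check v bs tbl"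
  shows "is_S3_K4e {0..<v} (mkB ` set bs)"
proof -
  have V: "\<And>t. t \<in> set bs \<Longrightarrow> valid v t" using assms unfolding check_def by (simp add: list_all_iff)
  have E: "\<And>a b c. a < b \<Longrightarrow> b < c \<Longrightarrow> c < v \<Longrightarrow> lk tbl (a,b,c) < length bs \<and>
        (a,b,c) \<in> set (sedges (bs ! lk tbl (a,b,c)))"
    using assms unfolding check_def by (simp add: list_all_iff)
  have U: "\<And>j p. j < length bs \<Longrightarrow> p \<in> set (sedges (bs ! j)) \<Longrightarrow> lk tbl p = j"
    using assms unfolding check_def by (simp add: list_all_iff)
  show ?thesis unfolding is_S3_K4e_def
  proof (intro conjI ballI allI impI)
    show "finite {0..<v}" by (rule finite_atLeastLessThan)
  next
    fix B assume "B \<in> mkB ` set bs"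
    then obtain t where "t \<in> set bs" "B = mkB t" by blast
    then show "is_K4e_block {0..<v} B" using V valid_block by blast
  next
    fix T :: "nat set" assume h: "T \<subseteq> {0..<v} \<and> card T = 3"
    have hc: "card T = 3" using h by (rule conjunct2)
    from card3_sorted[OF hc] obtain a b c where abc: "a < b" "b < c" "T = {a,b,c}" by (elim exE conjE)
    have "c \<in> T" using abc(3) by simp
    then have cv: "c < v" using h by auto
    define j where "j = lk tbl (a,b,c)"
    have j: "j < length bs" "(a,b,c) \<in> set (sedges (bs ! j))" using E[OF abc(1,2) cv] j_def by auto
    show "\<exists>!B. B \<in> mkB ` set bs \<and> T \<in> snd B"
    proof (rule ex1I[of _ "mkB (bs ! j)"])
      have "bs ! j \<in> set bs" using j(1) by simp
      moreover have "{a,b,c} \<in> snd (mkB (bs ! j))" using j(2) by (rule sedges_mem) simp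
      ultimately show "mkB (bs ! j) \<in> mkB ` set bs \<and> T \<in> snd (mkB (bs ! j))"
        unfolding abc(3) by (intro conjI imageI)
    next
      fix B assume B: "B \<in> mkB ` set bs \<and> T \<in> snd B"
      then obtain i where i: "i < length bs" "B = mkB (bs ! i)" by (auto simp: in_set_conv_nth)
      have vi: "valid v (bs ! i)" using V i(1) by simp
      have "{a,b,c} \<in> snd (mkB (bs ! i))" using B i(2) abc(3) by simp
      then have "(a,b,c) \<in> set (sedges (bs ! i))" by (rule mem_sedges[OF vi _ abc(1,2)])
      then have "lk tbl (a,b,c) = i" by (rule U[OF i(1)])
      then show "B = mkB (bs ! j)" using i j_def by simp
    qed
  qed
qed

definition bs10 :: "(nat\<times>nat\<times>nat\<times>nat\<times>nat) list" where
  "bs10 = [(3,5,0,2,1),(2,4,1,3,0),(3,6,2,8,9),(2,7,3,9,8),(4,5,0,8,2),(5,4,1,9,3),(7,8,0,3,9),(6,9,1,2,8),(4,6,2,5,9),(5,7,3,4,8),(2,4,0,9,5),(3,5,1,8,4),(6,9,0,8,1),(7,8,1,9,0),(2,7,4,8,9),(3,6,5,9,8),(6,7,4,9,3),(7,6,5,8,2),(0,3,4,6,8),(1,2,5,7,9),(1,4,0,7,5),(0,5,1,6,4),(2,6,0,7,9),(3,7,1,6,8)]"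

definition tbl10 :: "nat list list list" where
  "tbl10 = [[[0,0,0,0,0,0,0,0,0,0],[0,0,0,1,20,21,21,20,12,13],[0,0,0,0,10,0,22,22,4,10],[0,0,0,0,18,0,18,6,6,6],[0,0,0,0,0,4,18,20,4,10],[0,0,0,0,0,0,21,20,4,10],[0,0,0,0,0,0,0,22,12,12],[0,0,0,0,0,0,0,0,6,22],[0,0,0,0,0,0,0,0,0,12],[0,0,0,0,0,0,0,0,0,0]],[[0,0,0,0,0,0,0,0,0,0],[0,0,0,0,0,0,0,0,0,0],[0,0,0,1,1,19,7,19,7,7],[0,0,0,0,1,11,23,23,11,5],[0,0,0,0,0,5,21,20,11,5],[0,0,0,0,0,0,21,19,11,5],[0,0,0,0,0,0,0,23,23,7],[0,0,0,0,0,0,0,0,13,13],[0,0,0,0,0,0,0,0,0,13],[0,0,0,0,0,0,0,0,0,0]],[[0,0,0,0,0,0,0,0,0,0],[0,0,0,0,0,0,0,0,0,0],[0,0,0,0,0,0,0,0,0,0],[0,0,0,0,1,0,2,3,2,3],[0,0,0,0,0,8,8,14,14,10],[0,0,0,0,0,0,8,19,17,8],[0,0,0,0,0,0,0,22,2,7],[0,0,0,0,0,0,0,0,14,3],[0,0,0,0,0,0,0,0,0,2],[0,0,0,0,0,0,0,0,0,0]],[[0,0,0,0,0,0,0,0,0,0],[0,0,0,0,0,0,0,0,0,0],[0,0,0,0,0,0,0,0,0,0],[0,0,0,0,0,0,0,0,0,0],[0,0,0,0,0,9,18,9,9,16],[0,0,0,0,0,0,15,9,11,15],[0,0,0,0,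0,0,0,23,2,15],[0,0,0,0,0,0,0,0,6,3],[0,0,0,0,0,0,0,0,0,3],[0,0,0,0,0,0,0,0,0,0]],[[0,0,0,0,0,0,0,0,0,0],[0,0,0,0,0,0,0,0,0,0],[0,0,0,0,0,0,0,0,0,0],[0,0,0,0,0,0,0,0,0,0],[0,0,0,0,0,0,0,0,0,0],[0,0,0,0,0,0,8,9,4,5],[0,0,0,0,0,0,0,16,18,16],[0,0,0,0,0,0,0,0,14,16],[0,0,0,0,0,0,0,0,0,14],[0,0,0,0,0,0,0,0,0,0]],[[0,0,0,0,0,0,0,0,0,0],[0,0,0,0,0,0,0,0,0,0],[0,0,0,0,0,0,0,0,0,0],[0,0,0,0,0,0,0,0,0,0],[0,0,0,0,0,0,0,0,0,0],[0,0,0,0,0,0,0,0,0,0],[0,0,0,0,0,0,0,17,17,15],[0,0,0,0,0,0,0,0,17,19],[0,0,0,0,0,0,0,0,0,15],[0,0,0,0,0,0,0,0,0,0]],[[0,0,0,0,0,0,0,0,0,0],[0,0,0,0,0,0,0,0,0,0],[0,0,0,0,0,0,0,0,0,0],[0,0,0,0,0,0,0,0,0,0],[0,0,0,0,0,0,0,0,0,0],[0,0,0,0,0,0,0,0,0,0],[0,0,0,0,0,0,0,0,0,0],[0,0,0,0,0,0,0,0,17,16],[0,0,0,0,0,0,0,0,0,12],[0,0,0,0,0,0,0,0,0,0]],[[0,0,0,0,0,0,0,0,0,0],[0,0,0,0,0,0,0,0,0,0],[0,0,0,0,0,0,0,0,0,0],[0,0,0,0,0,0,0,0,0,0],[0,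0,0,0,0,0,0,0,0,0],[0,0,0,0,0,0,0,0,0,0],[0,0,0,0,0,0,0,0,0,0],[0,0,0,0,0,0,0,0,0,0],[0,0,0,0,0,0,0,0,0,13],[0,0,0,0,0,0,0,0,0,0]],[[0,0,0,0,0,0,0,0,0,0],[0,0,0,0,0,0,0,0,0,0],[0,0,0,0,0,0,0,0,0,0],[0,0,0,0,0,0,0,0,0,0],[0,0,0,0,0,0,0,0,0,0],[0,0,0,0,0,0,0,0,0,0],[0,0,0,0,0,0,0,0,0,0],[0,0,0,0,0,0,0,0,0,0],[0,0,0,0,0,0,0,0,0,0],[0,0,0,0,0,0,0,0,0,0]],[[0,0,0,0,0,0,0,0,0,0],[0,0,0,0,0,0,0,0,0,0],[0,0,0,0,0,0,0,0,0,0],[0,0,0,0,0,0,0,0,0,0],[0,0,0,0,0,0,0,0,0,0],[0,0,0,0,0,0,0,0,0,0],[0,0,0,0,0,0,0,0,0,0],[0,0,0,0,0,0,0,0,0,0],[0,0,0,0,0,0,0,0,0,0],[0,0,0,0,0,0,0,0,0,0]]]"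

definition bs12 :: "(nat\<times>nat\<times>nat\<times>nat\<times>nat) list" where
  "bs12 = [(1,11,0,5,8),(2,11,1,6,9),(3,11,2,7,10),(4,11,3,8,0),(5,11,4,9,1),(6,11,5,10,2),(7,11,6,0,3),(8,11,7,1,4),(9,11,8,2,5),(10,11,9,3,6),(0,11,10,4,7),(0,2,1,9,11),(1,3,2,10,11),(2,4,3,0,11),(3,5,4,1,11),(4,6,5,2,11),(5,7,6,3,11),(6,8,7,4,11),(7,9,8,5,11),(8,10,9,6,11),(9,0,10,7,11),(10,1,0,8,11),(0,7,1,3,11),(1,8,2,4,11),(2,9,3,5,11),(3,10,4,6,11),(4,0,5,7,11),(5,1,6,8,11),(6,2,7,9,11),(7,3,8,10,11),(8,4,9,0,11),(9,5,10,1,11),(10,6,0,2,11),(1,4,0,6,8),(2,5,1,7,9),(3,6,2,8,10),(4,7,3,9,0),(5,8,4,10,1),(6,9,5,0,2),(7,10,6,1,3),(8,0,7,2,4),(9,1,8,3,5),(10,2,9,4,6),(0,3,10,5,7)]"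

definition tbl12 :: "nat list list list" where
  "tbl12 = [[[0,0,0,0,0,0,0,0,0,0,0,0],[0,0,11,22,33,0,33,22,21,11,21,0],[0,0,0,13,13,38,32,40,40,11,32,32],[0,0,0,0,13,43,6,22,3,36,43,13],[0,0,0,0,0,26,33,26,30,30,10,10],[0,0,0,0,0,0,38,26,0,38,43,0],[0,0,0,0,0,0,0,6,33,38,32,6],[0,0,0,0,0,0,0,0,40,20,20,6],[0,0,0,0,0,0,0,0,0,30,21,21],[0,0,0,0,0,0,0,0,0,0,20,30],[0,0,0,0,0,0,0,0,0,0,0,10],[0,0,0,0,0,0,0,0,0,0,0,0]],[[0,0,0,0,0,0,0,0,0,0,0,0],[0,0,0,0,0,0,0,0,0,0,0,0],[0,0,0,12,23,34,1,34,23,11,12,1],[0,0,0,0,14,14,39,22,41,41,12,22],[0,0,0,0,0,14,33,7,23,4,37,14],[0,0,0,0,0,0,27,34,27,31,31,0],[0,0,0,0,0,0,0,39,27,1,39,1],[0,0,0,0,0,0,0,0,7,34,39,7],[0,0,0,0,0,0,0,0,0,41,21,7],[0,0,0,0,0,0,0,0,0,0,31,11],[0,0,0,0,0,0,0,0,0,0,0,31],[0,0,0,0,0,0,0,0,0,0,0,0]],[[0,0,0,0,0,0,0,0,0,0,0,0],[0,0,0,0,0,0,0,0,0,0,0,0],[0,0,0,0,0,0,0,0,0,0,0,0],[0,0,0,0,13,24,35,2,35,24,12,2],[0,0,0,0,0,15,15,40,23,42,42,23],[0,0,0,0,0,0,15,34,8,24,5,15],[0,0,0,0,0,0,0,28,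35,28,32,1],[0,0,0,0,0,0,0,0,40,28,2,2],[0,0,0,0,0,0,0,0,0,8,35,8],[0,0,0,0,0,0,0,0,0,0,42,8],[0,0,0,0,0,0,0,0,0,0,0,12],[0,0,0,0,0,0,0,0,0,0,0,0]],[[0,0,0,0,0,0,0,0,0,0,0,0],[0,0,0,0,0,0,0,0,0,0,0,0],[0,0,0,0,0,0,0,0,0,0,0,0],[0,0,0,0,0,0,0,0,0,0,0,0],[0,0,0,0,0,14,25,36,3,36,25,3],[0,0,0,0,0,0,16,16,41,24,43,24],[0,0,0,0,0,0,0,16,35,9,25,16],[0,0,0,0,0,0,0,0,29,36,29,2],[0,0,0,0,0,0,0,0,0,41,29,3],[0,0,0,0,0,0,0,0,0,0,9,9],[0,0,0,0,0,0,0,0,0,0,0,9],[0,0,0,0,0,0,0,0,0,0,0,0]],[[0,0,0,0,0,0,0,0,0,0,0,0],[0,0,0,0,0,0,0,0,0,0,0,0],[0,0,0,0,0,0,0,0,0,0,0,0],[0,0,0,0,0,0,0,0,0,0,0,0],[0,0,0,0,0,0,0,0,0,0,0,0],[0,0,0,0,0,0,15,26,37,4,37,4],[0,0,0,0,0,0,0,17,17,42,25,25],[0,0,0,0,0,0,0,0,17,36,10,17],[0,0,0,0,0,0,0,0,0,30,37,3],[0,0,0,0,0,0,0,0,0,0,42,4],[0,0,0,0,0,0,0,0,0,0,0,10],[0,0,0,0,0,0,0,0,0,0,0,0]],[[0,0,0,0,0,0,0,0,0,0,0,0],[0,0,0,0,0,0,0,0,0,0,0,0],[0,0,0,0,0,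0,0,0,0,0,0,0],[0,0,0,0,0,0,0,0,0,0,0,0],[0,0,0,0,0,0,0,0,0,0,0,0],[0,0,0,0,0,0,0,0,0,0,0,0],[0,0,0,0,0,0,0,16,27,38,5,5],[0,0,0,0,0,0,0,0,18,18,43,26],[0,0,0,0,0,0,0,0,0,18,37,18],[0,0,0,0,0,0,0,0,0,0,31,4],[0,0,0,0,0,0,0,0,0,0,0,5],[0,0,0,0,0,0,0,0,0,0,0,0]],[[0,0,0,0,0,0,0,0,0,0,0,0],[0,0,0,0,0,0,0,0,0,0,0,0],[0,0,0,0,0,0,0,0,0,0,0,0],[0,0,0,0,0,0,0,0,0,0,0,0],[0,0,0,0,0,0,0,0,0,0,0,0],[0,0,0,0,0,0,0,0,0,0,0,0],[0,0,0,0,0,0,0,0,0,0,0,0],[0,0,0,0,0,0,0,0,17,28,39,6],[0,0,0,0,0,0,0,0,0,19,19,27],[0,0,0,0,0,0,0,0,0,0,19,19],[0,0,0,0,0,0,0,0,0,0,0,5],[0,0,0,0,0,0,0,0,0,0,0,0]],[[0,0,0,0,0,0,0,0,0,0,0,0],[0,0,0,0,0,0,0,0,0,0,0,0],[0,0,0,0,0,0,0,0,0,0,0,0],[0,0,0,0,0,0,0,0,0,0,0,0],[0,0,0,0,0,0,0,0,0,0,0,0],[0,0,0,0,0,0,0,0,0,0,0,0],[0,0,0,0,0,0,0,0,0,0,0,0],[0,0,0,0,0,0,0,0,0,0,0,0],[0,0,0,0,0,0,0,0,0,18,29,7],[0,0,0,0,0,0,0,0,0,0,20,28],[0,0,0,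0,0,0,0,0,0,0,0,20],[0,0,0,0,0,0,0,0,0,0,0,0]],[[0,0,0,0,0,0,0,0,0,0,0,0],[0,0,0,0,0,0,0,0,0,0,0,0],[0,0,0,0,0,0,0,0,0,0,0,0],[0,0,0,0,0,0,0,0,0,0,0,0],[0,0,0,0,0,0,0,0,0,0,0,0],[0,0,0,0,0,0,0,0,0,0,0,0],[0,0,0,0,0,0,0,0,0,0,0,0],[0,0,0,0,0,0,0,0,0,0,0,0],[0,0,0,0,0,0,0,0,0,0,0,0],[0,0,0,0,0,0,0,0,0,0,19,8],[0,0,0,0,0,0,0,0,0,0,0,29],[0,0,0,0,0,0,0,0,0,0,0,0]],[[0,0,0,0,0,0,0,0,0,0,0,0],[0,0,0,0,0,0,0,0,0,0,0,0],[0,0,0,0,0,0,0,0,0,0,0,0],[0,0,0,0,0,0,0,0,0,0,0,0],[0,0,0,0,0,0,0,0,0,0,0,0],[0,0,0,0,0,0,0,0,0,0,0,0],[0,0,0,0,0,0,0,0,0,0,0,0],[0,0,0,0,0,0,0,0,0,0,0,0],[0,0,0,0,0,0,0,0,0,0,0,0],[0,0,0,0,0,0,0,0,0,0,0,0],[0,0,0,0,0,0,0,0,0,0,0,9],[0,0,0,0,0,0,0,0,0,0,0,0]],[[0,0,0,0,0,0,0,0,0,0,0,0],[0,0,0,0,0,0,0,0,0,0,0,0],[0,0,0,0,0,0,0,0,0,0,0,0],[0,0,0,0,0,0,0,0,0,0,0,0],[0,0,0,0,0,0,0,0,0,0,0,0],[0,0,0,0,0,0,0,0,0,0,0,0],[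0,0,0,0,0,0,0,0,0,0,0,0],[0,0,0,0,0,0,0,0,0,0,0,0],[0,0,0,0,0,0,0,0,0,0,0,0],[0,0,0,0,0,0,0,0,0,0,0,0],[0,0,0,0,0,0,0,0,0,0,0,0],[0,0,0,0,0,0,0,0,0,0,0,0]],[[0,0,0,0,0,0,0,0,0,0,0,0],[0,0,0,0,0,0,0,0,0,0,0,0],[0,0,0,0,0,0,0,0,0,0,0,0],[0,0,0,0,0,0,0,0,0,0,0,0],[0,0,0,0,0,0,0,0,0,0,0,0],[0,0,0,0,0,0,0,0,0,0,0,0],[0,0,0,0,0,0,0,0,0,0,0,0],[0,0,0,0,0,0,0,0,0,0,0,0],[0,0,0,0,0,0,0,0,0,0,0,0],[0,0,0,0,0,0,0,0,0,0,0,0],[0,0,0,0,0,0,0,0,0,0,0,0],[0,0,0,0,0,0,0,0,0,0,0,0]]]"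

definition bs15 :: "(nat\<times>nat\<times>nat\<times>nat\<times>nat) list" where
  "bs15 = [(3,7,0,13,14),(4,8,1,13,14),(5,9,2,13,14),(6,10,3,13,14),(7,11,4,13,14),(8,12,5,13,14),(9,0,6,13,14),(10,1,7,13,14),(11,2,8,13,14),(12,3,9,13,14),(0,4,10,13,14),(1,5,11,13,14),(2,6,12,13,14),(5,7,0,1,13),(6,8,1,2,13),(7,9,2,3,13),(8,10,3,4,13),(9,11,4,5,13),(10,12,5,6,13),(11,0,6,7,13),(12,1,7,8,13),(0,2,8,9,13),(1,3,9,10,13),(2,4,10,11,13),(3,5,11,12,13),(4,6,12,0,13),(0,3,1,6,13),(1,4,2,7,13),(2,5,3,8,13),(3,6,4,9,13),(4,7,5,10,13),(5,8,6,11,13),(6,9,7,12,13),(7,10,8,0,13),(8,11,9,1,13),(9,12,10,2,13),(10,0,11,3,13),(11,1,12,4,13),(12,2,0,5,13),(6,10,0,2,13),(7,11,1,3,13),(8,12,2,4,13),(9,0,3,5,13),(10,1,4,6,13),(11,2,5,7,13),(12,3,6,8,13),(0,4,7,9,13),(1,5,8,10,13),(2,6,9,11,13),(3,7,10,12,13),(4,8,11,0,13),(5,9,12,1,13),(0,14,2,7,10),(1,14,3,8,11),(2,14,4,9,12),(3,14,5,10,0),(4,14,6,11,1),(5,14,7,12,2),(6,14,8,0,3),(7,14,9,1,4),(8,14,10,2,5),(9,14,11,3,6),(10,14,12,4,7),(11,14,0,5,8),(12,14,1,6,9),(4,14,0,1,8),(5,14,1,2,9),(6,14,2,3,10),(7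,14,3,4,11),(8,14,4,5,12),(9,14,5,6,0),(10,14,6,7,1),(11,14,7,8,2),(12,14,8,9,3),(0,14,9,10,4),(1,14,10,11,5),(2,14,11,12,6),(3,14,12,0,7),(2,11,0,1,9),(3,12,1,2,10),(4,0,2,3,11),(5,1,3,4,12),(6,2,4,5,0),(7,3,5,6,1),(8,4,6,7,2),(9,5,7,8,3),(10,6,8,9,4),(11,7,9,10,5),(12,8,10,11,6),(0,9,11,12,7),(1,10,12,0,8)]"

definition tbl15 :: "nat list list list" where
  "tbl15 = [[[0,0,0,0,0,0,0,0,0,0,0,0,0,0,0],[0,0,78,26,65,13,26,13,65,78,90,78,90,13,65],[0,0,0,80,80,38,39,52,21,21,39,78,38,39,52],[0,0,0,0,80,42,26,0,58,42,36,36,77,0,77],[0,0,0,0,0,82,25,46,50,46,10,50,25,10,65],[0,0,0,0,0,0,70,13,63,42,55,63,38,38,63],[0,0,0,0,0,0,0,19,58,6,39,19,25,6,58],[0,0,0,0,0,0,0,0,33,46,33,19,77,0,52],[0,0,0,0,0,0,0,0,0,21,33,50,90,33,58],[0,0,0,0,0,0,0,0,0,0,74,89,89,6,74],[0,0,0,0,0,0,0,0,0,0,0,36,90,10,74],[0,0,0,0,0,0,0,0,0,0,0,0,89,50,63],[0,0,0,0,0,0,0,0,0,0,0,0,0,25,77],[0,0,0,0,0,0,0,0,0,0,0,0,0,0,0],[0,0,0,0,0,0,0,0,0,0,0,0,0,0,0]],[[0,0,0,0,0,0,0,0,0,0,0,0,0,0,0],[0,0,0,0,0,0,0,0,0,0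,0,0,0,0,0],[0,0,0,79,27,66,14,27,14,66,79,78,79,14,66],[0,0,0,0,81,81,26,40,53,22,22,40,79,40,53],[0,0,0,0,0,81,43,27,1,59,43,37,37,1,65],[0,0,0,0,0,0,83,13,47,51,47,11,51,11,66],[0,0,0,0,0,0,0,71,14,64,43,56,64,26,64],[0,0,0,0,0,0,0,0,20,59,7,40,20,7,59],[0,0,0,0,0,0,0,0,0,34,47,34,20,1,53],[0,0,0,0,0,0,0,0,0,0,22,34,51,34,59],[0,0,0,0,0,0,0,0,0,0,0,75,90,7,75],[0,0,0,0,0,0,0,0,0,0,0,0,37,11,75],[0,0,0,0,0,0,0,0,0,0,0,0,0,51,64],[0,0,0,0,0,0,0,0,0,0,0,0,0,0,1],[0,0,0,0,0,0,0,0,0,0,0,0,0,0,0]],[[0,0,0,0,0,0,0,0,0,0,0,0,0,0,0],[0,0,0,0,0,0,0,0,0,0,0,0,0,0,0],[0,0,0,0,0,0,0,0,0,0,0,0,0,0,0],[0,0,0,0,80,28,67,15,28,15,67,80,79,15,67],[0,0,0,0,0,82,82,27,41,54,23,23,41,41,54],[0,0,0,0,0,0,82,44,28,2,60,44,38,2,66],[0,0,0,0,0,0,0,84,14,48,39,48,12,12,67],[0,0,0,0,0,0,0,0,72,15,52,44,57,27,52],[0,0,0,0,0,0,0,0,0,21,60,8,41,8,60],[0,0,0,0,0,0,0,0,0,0,35,48,35,2,54],[0,0,0,0,0,0,0,0,0,0,0,23,35,35,60],[0,0,0,0,0,0,0,0,0,0,0,0,76,8,76],[0,0,0,0,0,0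,0,0,0,0,0,0,0,12,76],[0,0,0,0,0,0,0,0,0,0,0,0,0,0,2],[0,0,0,0,0,0,0,0,0,0,0,0,0,0,0]],[[0,0,0,0,0,0,0,0,0,0,0,0,0,0,0],[0,0,0,0,0,0,0,0,0,0,0,0,0,0,0],[0,0,0,0,0,0,0,0,0,0,0,0,0,0,0],[0,0,0,0,0,0,0,0,0,0,0,0,0,0,0],[0,0,0,0,0,81,29,68,16,29,16,68,81,16,68],[0,0,0,0,0,0,83,83,28,42,55,24,24,42,55],[0,0,0,0,0,0,0,83,45,29,3,61,45,3,67],[0,0,0,0,0,0,0,0,85,15,49,40,49,0,68],[0,0,0,0,0,0,0,0,0,73,16,53,45,28,53],[0,0,0,0,0,0,0,0,0,0,22,61,9,9,61],[0,0,0,0,0,0,0,0,0,0,0,36,49,3,55],[0,0,0,0,0,0,0,0,0,0,0,0,24,36,61],[0,0,0,0,0,0,0,0,0,0,0,0,0,9,77],[0,0,0,0,0,0,0,0,0,0,0,0,0,0,3],[0,0,0,0,0,0,0,0,0,0,0,0,0,0,0]],[[0,0,0,0,0,0,0,0,0,0,0,0,0,0,0],[0,0,0,0,0,0,0,0,0,0,0,0,0,0,0],[0,0,0,0,0,0,0,0,0,0,0,0,0,0,0],[0,0,0,0,0,0,0,0,0,0,0,0,0,0,0],[0,0,0,0,0,0,0,0,0,0,0,0,0,0,0],[0,0,0,0,0,0,82,30,69,17,30,17,69,17,69],[0,0,0,0,0,0,0,84,84,29,43,56,25,43,56],[0,0,0,0,0,0,0,0,84,46,30,4,62,4,68],[0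,0,0,0,0,0,0,0,0,86,16,50,41,1,69],[0,0,0,0,0,0,0,0,0,0,74,17,54,29,54],[0,0,0,0,0,0,0,0,0,0,0,23,62,10,62],[0,0,0,0,0,0,0,0,0,0,0,0,37,4,56],[0,0,0,0,0,0,0,0,0,0,0,0,0,37,62],[0,0,0,0,0,0,0,0,0,0,0,0,0,0,4],[0,0,0,0,0,0,0,0,0,0,0,0,0,0,0]],[[0,0,0,0,0,0,0,0,0,0,0,0,0,0,0],[0,0,0,0,0,0,0,0,0,0,0,0,0,0,0],[0,0,0,0,0,0,0,0,0,0,0,0,0,0,0],[0,0,0,0,0,0,0,0,0,0,0,0,0,0,0],[0,0,0,0,0,0,0,0,0,0,0,0,0,0,0],[0,0,0,0,0,0,0,0,0,0,0,0,0,0,0],[0,0,0,0,0,0,0,83,31,70,18,31,18,18,70],[0,0,0,0,0,0,0,0,85,85,30,44,57,44,57],[0,0,0,0,0,0,0,0,0,85,47,31,5,5,69],[0,0,0,0,0,0,0,0,0,0,87,17,51,2,70],[0,0,0,0,0,0,0,0,0,0,0,75,18,30,55],[0,0,0,0,0,0,0,0,0,0,0,0,24,11,63],[0,0,0,0,0,0,0,0,0,0,0,0,0,5,57],[0,0,0,0,0,0,0,0,0,0,0,0,0,0,5],[0,0,0,0,0,0,0,0,0,0,0,0,0,0,0]],[[0,0,0,0,0,0,0,0,0,0,0,0,0,0,0],[0,0,0,0,0,0,0,0,0,0,0,0,0,0,0],[0,0,0,0,0,0,0,0,0,0,0,0,0,0,0],[0,0,0,0,0,0,0,0,0,0,0,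0,0,0,0],[0,0,0,0,0,0,0,0,0,0,0,0,0,0,0],[0,0,0,0,0,0,0,0,0,0,0,0,0,0,0],[0,0,0,0,0,0,0,0,0,0,0,0,0,0,0],[0,0,0,0,0,0,0,0,84,32,71,19,32,19,71],[0,0,0,0,0,0,0,0,0,86,86,31,45,45,58],[0,0,0,0,0,0,0,0,0,0,86,48,32,6,70],[0,0,0,0,0,0,0,0,0,0,0,88,18,3,71],[0,0,0,0,0,0,0,0,0,0,0,0,76,31,56],[0,0,0,0,0,0,0,0,0,0,0,0,0,12,64],[0,0,0,0,0,0,0,0,0,0,0,0,0,0,6],[0,0,0,0,0,0,0,0,0,0,0,0,0,0,0]],[[0,0,0,0,0,0,0,0,0,0,0,0,0,0,0],[0,0,0,0,0,0,0,0,0,0,0,0,0,0,0],[0,0,0,0,0,0,0,0,0,0,0,0,0,0,0],[0,0,0,0,0,0,0,0,0,0,0,0,0,0,0],[0,0,0,0,0,0,0,0,0,0,0,0,0,0,0],[0,0,0,0,0,0,0,0,0,0,0,0,0,0,0],[0,0,0,0,0,0,0,0,0,0,0,0,0,0,0],[0,0,0,0,0,0,0,0,0,0,0,0,0,0,0],[0,0,0,0,0,0,0,0,0,85,33,72,20,20,72],[0,0,0,0,0,0,0,0,0,0,87,87,32,46,59],[0,0,0,0,0,0,0,0,0,0,0,87,49,7,71],[0,0,0,0,0,0,0,0,0,0,0,0,89,4,72],[0,0,0,0,0,0,0,0,0,0,0,0,0,32,57],[0,0,0,0,0,0,0,0,0,0,0,0,0,0,7],[0,0,0,0,0,0,0,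0,0,0,0,0,0,0,0]],[[0,0,0,0,0,0,0,0,0,0,0,0,0,0,0],[0,0,0,0,0,0,0,0,0,0,0,0,0,0,0],[0,0,0,0,0,0,0,0,0,0,0,0,0,0,0],[0,0,0,0,0,0,0,0,0,0,0,0,0,0,0],[0,0,0,0,0,0,0,0,0,0,0,0,0,0,0],[0,0,0,0,0,0,0,0,0,0,0,0,0,0,0],[0,0,0,0,0,0,0,0,0,0,0,0,0,0,0],[0,0,0,0,0,0,0,0,0,0,0,0,0,0,0],[0,0,0,0,0,0,0,0,0,0,0,0,0,0,0],[0,0,0,0,0,0,0,0,0,0,86,34,73,21,73],[0,0,0,0,0,0,0,0,0,0,0,88,88,47,60],[0,0,0,0,0,0,0,0,0,0,0,0,88,8,72],[0,0,0,0,0,0,0,0,0,0,0,0,0,5,73],[0,0,0,0,0,0,0,0,0,0,0,0,0,0,8],[0,0,0,0,0,0,0,0,0,0,0,0,0,0,0]],[[0,0,0,0,0,0,0,0,0,0,0,0,0,0,0],[0,0,0,0,0,0,0,0,0,0,0,0,0,0,0],[0,0,0,0,0,0,0,0,0,0,0,0,0,0,0],[0,0,0,0,0,0,0,0,0,0,0,0,0,0,0],[0,0,0,0,0,0,0,0,0,0,0,0,0,0,0],[0,0,0,0,0,0,0,0,0,0,0,0,0,0,0],[0,0,0,0,0,0,0,0,0,0,0,0,0,0,0],[0,0,0,0,0,0,0,0,0,0,0,0,0,0,0],[0,0,0,0,0,0,0,0,0,0,0,0,0,0,0],[0,0,0,0,0,0,0,0,0,0,0,0,0,0,0],[0,0,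0,0,0,0,0,0,0,0,0,87,35,22,74],[0,0,0,0,0,0,0,0,0,0,0,0,89,48,61],[0,0,0,0,0,0,0,0,0,0,0,0,0,9,73],[0,0,0,0,0,0,0,0,0,0,0,0,0,0,9],[0,0,0,0,0,0,0,0,0,0,0,0,0,0,0]],[[0,0,0,0,0,0,0,0,0,0,0,0,0,0,0],[0,0,0,0,0,0,0,0,0,0,0,0,0,0,0],[0,0,0,0,0,0,0,0,0,0,0,0,0,0,0],[0,0,0,0,0,0,0,0,0,0,0,0,0,0,0],[0,0,0,0,0,0,0,0,0,0,0,0,0,0,0],[0,0,0,0,0,0,0,0,0,0,0,0,0,0,0],[0,0,0,0,0,0,0,0,0,0,0,0,0,0,0],[0,0,0,0,0,0,0,0,0,0,0,0,0,0,0],[0,0,0,0,0,0,0,0,0,0,0,0,0,0,0],[0,0,0,0,0,0,0,0,0,0,0,0,0,0,0],[0,0,0,0,0,0,0,0,0,0,0,0,0,0,0],[0,0,0,0,0,0,0,0,0,0,0,0,88,23,75],[0,0,0,0,0,0,0,0,0,0,0,0,0,49,62],[0,0,0,0,0,0,0,0,0,0,0,0,0,0,10],[0,0,0,0,0,0,0,0,0,0,0,0,0,0,0]],[[0,0,0,0,0,0,0,0,0,0,0,0,0,0,0],[0,0,0,0,0,0,0,0,0,0,0,0,0,0,0],[0,0,0,0,0,0,0,0,0,0,0,0,0,0,0],[0,0,0,0,0,0,0,0,0,0,0,0,0,0,0],[0,0,0,0,0,0,0,0,0,0,0,0,0,0,0],[0,0,0,0,0,0,0,0,0,0,0,0,0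,0,0],[0,0,0,0,0,0,0,0,0,0,0,0,0,0,0],[0,0,0,0,0,0,0,0,0,0,0,0,0,0,0],[0,0,0,0,0,0,0,0,0,0,0,0,0,0,0],[0,0,0,0,0,0,0,0,0,0,0,0,0,0,0],[0,0,0,0,0,0,0,0,0,0,0,0,0,0,0],[0,0,0,0,0,0,0,0,0,0,0,0,0,0,0],[0,0,0,0,0,0,0,0,0,0,0,0,0,24,76],[0,0,0,0,0,0,0,0,0,0,0,0,0,0,11],[0,0,0,0,0,0,0,0,0,0,0,0,0,0,0]],[[0,0,0,0,0,0,0,0,0,0,0,0,0,0,0],[0,0,0,0,0,0,0,0,0,0,0,0,0,0,0],[0,0,0,0,0,0,0,0,0,0,0,0,0,0,0],[0,0,0,0,0,0,0,0,0,0,0,0,0,0,0],[0,0,0,0,0,0,0,0,0,0,0,0,0,0,0],[0,0,0,0,0,0,0,0,0,0,0,0,0,0,0],[0,0,0,0,0,0,0,0,0,0,0,0,0,0,0],[0,0,0,0,0,0,0,0,0,0,0,0,0,0,0],[0,0,0,0,0,0,0,0,0,0,0,0,0,0,0],[0,0,0,0,0,0,0,0,0,0,0,0,0,0,0],[0,0,0,0,0,0,0,0,0,0,0,0,0,0,0],[0,0,0,0,0,0,0,0,0,0,0,0,0,0,0],[0,0,0,0,0,0,0,0,0,0,0,0,0,0,0],[0,0,0,0,0,0,0,0,0,0,0,0,0,0,12],[0,0,0,0,0,0,0,0,0,0,0,0,0,0,0]],[[0,0,0,0,0,0,0,0,0,0,0,0,0,0,0],[0,0,0,0,0,0,0,0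,0,0,0,0,0,0,0],[0,0,0,0,0,0,0,0,0,0,0,0,0,0,0],[0,0,0,0,0,0,0,0,0,0,0,0,0,0,0],[0,0,0,0,0,0,0,0,0,0,0,0,0,0,0],[0,0,0,0,0,0,0,0,0,0,0,0,0,0,0],[0,0,0,0,0,0,0,0,0,0,0,0,0,0,0],[0,0,0,0,0,0,0,0,0,0,0,0,0,0,0],[0,0,0,0,0,0,0,0,0,0,0,0,0,0,0],[0,0,0,0,0,0,0,0,0,0,0,0,0,0,0],[0,0,0,0,0,0,0,0,0,0,0,0,0,0,0],[0,0,0,0,0,0,0,0,0,0,0,0,0,0,0],[0,0,0,0,0,0,0,0,0,0,0,0,0,0,0],[0,0,0,0,0,0,0,0,0,0,0,0,0,0,0],[0,0,0,0,0,0,0,0,0,0,0,0,0,0,0]],[[0,0,0,0,0,0,0,0,0,0,0,0,0,0,0],[0,0,0,0,0,0,0,0,0,0,0,0,0,0,0],[0,0,0,0,0,0,0,0,0,0,0,0,0,0,0],[0,0,0,0,0,0,0,0,0,0,0,0,0,0,0],[0,0,0,0,0,0,0,0,0,0,0,0,0,0,0],[0,0,0,0,0,0,0,0,0,0,0,0,0,0,0],[0,0,0,0,0,0,0,0,0,0,0,0,0,0,0],[0,0,0,0,0,0,0,0,0,0,0,0,0,0,0],[0,0,0,0,0,0,0,0,0,0,0,0,0,0,0],[0,0,0,0,0,0,0,0,0,0,0,0,0,0,0],[0,0,0,0,0,0,0,0,0,0,0,0,0,0,0],[0,0,0,0,0,0,0,0,0,0,0,0,0,0,0],[0,0,0,0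,0,0,0,0,0,0,0,0,0,0,0],[0,0,0,0,0,0,0,0,0,0,0,0,0,0,0],[0,0,0,0,0,0,0,0,0,0,0,0,0,0,0]]]"

lemma c10: "check 10 bs10 tbl10" by code_simp
lemma c12: "check 12 bs12 tbl12" by code_simp
lemma c15: "check 15 bs15 tbl15" by code_simp

lemma ex_of: "check v bs tbl \<Longrightarrow> \<exists>(X::nat set) \<B>. finite X \<and> card X = v \<and> is_S3_K4e X \<B>"
  using check_sound by (intro exI[of _ "{0..<v}"]) auto

theorem lemma3p2:
  shows "\<forall>v \<in> {10, 12, 15::nat}. \<exists>(X::nat set) \<B>. finite X \<and> card X = v \<and> is_S3_K4e X \<B>"
  using ex_of[OF c10] ex_of[OF c12] ex_of[OF c15] by auto

end
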